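(* Let $\mathcal{U}$ be a finite-dimensional real Hilbert space, let $\mathcal{W}$ be a real Hilbert space, let $\phi:\mathcal{U}\to\mathcal{B}(\mathcal{U},\mathcal{W})$ be a map, let $(u_i,y_i)\in\mathcal{U}\times\mathcal{U}$, $i=1,\dots,n$, be data, and let $\gamma>0$. For $Q\in\mathcal{B}(\mathcal{W})$ let $L(Q)=\sum_{i=1}^n\|\phi(u_i)^*Q\phi(u_i)u_i-y_i\|_{\mathcal{U}}^2$, and let $\Phi\in\mathcal{B}(\mathcal{U}^n,\mathcal{W})$ be defined by $\Phi(v_1,\dots,v_n)=\sum_{i=1}^n\phi(u_i)v_i$. Consider the problems $$\text{(P)}\quad \min_{Q\in\mathcal{B}^+(\mathcal{W})} L(Q)+\gamma\|Q\|,\qquad \text{(P$'$)}\quad \min_{M\in\mathcal{B}^+(\mathcal{U}^n)} L(\Phi M\Phi^* )+\gamma\|\Phi M\Phi^*\|,$$ where $\|\cdot\|$ is the operator norm. Then a solution (minimizer) of (P) exists if and only if a solution of (P$'$) exists. Moreover, if it exists, a solution of (P) is given by $\hat Q=\Phi M\Phi^*$, where $M\in\mathcal{B}^+(\mathcal{U}^n)$ is a solution of (P$'$).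
   Context: $\mathcal{U}^n$ is the $n$-fold Cartesian product with inner product $\sum_i\langle u_i,v_i\rangle_{\mathcal{U}}$. $\mathcal{B}(\mathcal{X},\mathcal{Y})$ denotes bounded linear operators, $\mathcal{B}(\mathcal{X})=\mathcal{B}(\mathcal{X},\mathcal{X})$, $^*$ is the adjoint. An operator $G$ on a Hilbert space $\mathcal{H}$ is nonnegative if $\langle Gu,u\rangle_{\mathcal{H}}\ge0$ for all $u$ (self-adjointness not required); $\mathcal{B}^+(\mathcal{H})$ is the set of nonnegative operators in $\mathcal{B}(\mathcal{H})$. *)

theory Defs
  imports "HOL-Analysis.Analysis"
begin

definition badj :: "('a::real_inner \<Rightarrow>\<^sub>L 'b::real_inner) \<Rightarrow> ('b \<Rightarrow>\<^sub>L 'a)" where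
  "badj f = Blinfun (adjoint (blinfun_apply f))"

text \<open>Nonnegative operator: \<langle>G u, u\<rangle> \<ge> 0 for all u (self-adjointness not required).\<close>
definition nonneg_op :: "('a::real_inner \<Rightarrow>\<^sub>L 'a) \<Rightarrow> bool" where
  "nonneg_op G \<longleftrightarrow> (\<forall>v. 0 \<le> inner (blinfun_apply G v) v)"

definition loss ::
  "('u::real_inner \<Rightarrow> ('u \<Rightarrow>\<^sub>L 'w::real_inner)) \<Rightarrow> ('n::finite \<Rightarrow> 'u) \<Rightarrow> ('n \<Rightarrow> 'u)
     \<Rightarrow> ('w \<Rightarrow>\<^sub>L 'w) \<Rightarrow> real" where
  "loss \<phi> u y Q = (\<Sum>i\<in>UNIV. (norm (blinfun_apply (badj (\<phi> (u i)))
        (blinfun_apply Q (blinfun_apply (\<phi> (u i)) (u i))) - y i))\<^sup>2)"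

definition Phi_op ::
  "('u::real_inner \<Rightarrow> ('u \<Rightarrow>\<^sub>L 'w::real_inner)) \<Rightarrow> ('n::finite \<Rightarrow> 'u) \<Rightarrow> (('u ^ 'n) \<Rightarrow>\<^sub>L 'w)" where
  "Phi_op \<phi> u = Blinfun (\<lambda>v. \<Sum>i\<in>UNIV. blinfun_apply (\<phi> (u i)) (v $ i))"

definition objP where
  "objP \<phi> u y \<gamma> Q = loss \<phi> u y Q + \<gamma> * norm Q"

definition objP' where
  "objP' \<phi> u y \<gamma> M = objP \<phi> u y \<gamma> (Phi_op \<phi> u o\<^sub>L M o\<^sub>L badj (Phi_op \<phi> u))"

definition solves_P where
  "solves_P \<phi> u y \<gamma> Q \<longleftrightarrow> nonneg_op Q \<and> (\<forall>Q'. nonneg_op Q' \<longrightarrow> objP \<phi> u y \<gamma> Q \<le> objP \<phi> u y \<gamma> Q')"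

definition solves_P' where
  "solves_P' \<phi> u y \<gamma> M \<longleftrightarrow> nonneg_op M \<and> (\<forall>M'. nonneg_op M' \<longrightarrow> objP' \<phi> u y \<gamma> M \<le> objP' \<phi> u y \<gamma> M')"

end

theory Submission
  imports Defs
begin


lemma adjoint_eucl:
  fixes f :: "'a::euclidean_space \<Rightarrow> 'b::real_inner"
  assumes "linear f"
  shows "adjoint f = (\<lambda>y. \<Sum>i\<in>Basis. (f i \<bullet> y) *\<^sub>R i)"
proof (rule adjoint_unique, intro allI)
  interpret linear f by fact
  fix x y
  have "f x \<bullet> y = f (\<Sum>i\<in>Basis. (x \<bullet> i) *\<^sub>R i) \<bullet> y"
    by (simp add: euclidean_representation)
  also have "\<dots> = (\<Sum>i\<in>Basis. (x \<bullet> i) *\<^sub>R f i) \<bullet> y"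
    by (simp add: sum scale)
  finally show "f x \<bullet> y = x \<bullet> (\<Sum>i\<in>Basis. (f i \<bullet> y) *\<^sub>R i)"
    by (simp add: inner_sum_left inner_sum_right mult.commute)
qed

lemma bl_adj_formula:
  fixes f :: "'a::euclidean_space \<Rightarrow>\<^sub>L 'b::real_inner"
  shows "bounded_linear (\<lambda>y. \<Sum>i\<in>Basis. (f i \<bullet> y) *\<^sub>R (i::'a))"
  by (intro bounded_linear_sum bounded_linear_scaleR_const bounded_linear_inner_right)

lemma badj_apply:
  fixes f :: "'a::euclidean_space \<Rightarrow>\<^sub>L 'b::real_inner"
  shows "blinfun_apply (badj f) y = (\<Sum>i\<in>Basis. (f i \<bullet> y) *\<^sub>R i)"
  unfolding badj_def adjoint_eucl[OF bounded_linear.linear[OF blinfun.bounded_linear_right]]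
  by (simp add: bounded_linear_Blinfun_apply[OF bl_adj_formula])

lemma badj_inner:
  fixes f :: "'a::euclidean_space \<Rightarrow>\<^sub>L 'b::real_inner"
  shows "x \<bullet> blinfun_apply (badj f) y = f x \<bullet> y"
proof -
  have "f x \<bullet> y = f (\<Sum>i\<in>Basis. (x \<bullet> i) *\<^sub>R i) \<bullet> y"
    by (simp add: euclidean_representation)
  also have "\<dots> = (\<Sum>i\<in>Basis. (x \<bullet> i) *\<^sub>R f i) \<bullet> y"
    by (simp add: blinfun.sum_right blinfun.scaleR_right)
  also have "\<dots> = x \<bullet> (\<Sum>i\<in>Basis. (f i \<bullet> y) *\<^sub>R i)"
    by (simp add: inner_sum_left inner_sum_right mult.commute)
  finally show ?thesis by (simp add: badj_apply)
qed

lemma Phi_apply: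
  "blinfun_apply (Phi_op \<phi> u) v = (\<Sum>i\<in>UNIV. blinfun_apply (\<phi> (u i)) (v $ i))"
proof -
  have "bounded_linear (\<lambda>v. \<Sum>i\<in>UNIV. blinfun_apply (\<phi> (u i)) (v $ i))"
    by (intro bounded_linear_sum bounded_linear_compose[OF blinfun.bounded_linear_right] bounded_linear_vec_nth)
  then show ?thesis unfolding Phi_op_def by (simp add: bounded_linear_Blinfun_apply)
qed

lemma Phi_axis:
  "blinfun_apply (Phi_op \<phi> u) (axis i x) = blinfun_apply (\<phi> (u i)) x"
  unfolding Phi_apply axis_def
  by (simp add: blinfun.zero_right if_distrib cong: if_cong)



lemma gs:
  fixes S :: "'w::real_inner set"
  assumes "finite S"
  shows "\<exists>E. finite E \<and> (\<forall>e\<in>E. e \<bullet> e = 1) \<and> (\<forall>e\<in>E. \<forall>e'\<in>E. e \<noteq> e' \<longrightarrow> e \<bullet> e' = 0)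
     \<and> E \<subseteq> span S \<and> S \<subseteq> span E"
  using assms
proof (induction S rule: finite_induct)
  case empty show ?case by (intro exI[of _ "{}"]) auto
next
  case (insert a S)
  from insert.IH obtain E where EE: "finite E \<and> (\<forall>e\<in>E. e \<bullet> e = 1) \<and> (\<forall>e\<in>E. \<forall>e'\<in>E. e \<noteq> e' \<longrightarrow> e \<bullet> e' = 0)
     \<and> E \<subseteq> span S \<and> S \<subseteq> span E" by (rule exE)
  note E = conjunct1[OF EE]
  note n = conjunct1[OF conjunct2[OF EE]]
  note o = conjunct1[OF conjunct2[OF conjunct2[OF EE]]]
  note sub = conjunct1[OF conjunct2[OF conjunct2[OF conjunct2[OF EE]]]]
  note sup = conjunct2[OF conjunct2[OF conjunct2[OF conjunct2[OF EE]]]]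
  define r where "r = a - (\<Sum>e\<in>E. (e \<bullet> a) *\<^sub>R e)"
  have rE: "e \<bullet> r = 0" if "e \<in> E" for e
  proof -
    have "(\<Sum>e'\<in>E. (e' \<bullet> a) * (e \<bullet> e')) = (\<Sum>e'\<in>E. if e' = e then e \<bullet> a else 0)"
      by (rule sum.cong) (use n o that in \<open>auto simp: inner_commute\<close>)
    also have "\<dots> = e \<bullet> a" using E that by simp
    finally show ?thesis by (simp add: r_def inner_diff_right inner_sum_right)
  qed
  have spanE: "span E \<subseteq> span (insert a S)"
  proof -
    have "span E \<subseteq> span S" using span_mono[OF sub] by (simp only: span_span)
    then show ?thesis using span_mono[OF subset_insertI, of S a] by (rule order_trans)
  qed
  have Esub: "E \<subseteq> span (insert a S)" using span_superset[of E] spanE by (rule order_trans)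
  have r_span: "r \<in> span (insert a S)"
    unfolding r_def
  proof (intro span_diff span_sum span_scale)
    show "a \<in> span (insert a S)" by (simp add: span_base)
    fix e assume "e \<in> E"
    then show "e \<in> span (insert a S)" using Esub by blast
  qed
  show ?case
  proof (cases "r = 0")
    case True
    then have "a = (\<Sum>e\<in>E. (e \<bullet> a) *\<^sub>R e)" by (simp add: r_def)
    moreover have "(\<Sum>e\<in>E. (e \<bullet> a) *\<^sub>R e) \<in> span E"
      by (intro span_sum span_scale span_base)
    ultimately have "a \<in> span E" by simp
    then have "insert a S \<subseteq> span E" using sup by blast
    then show ?thesis using E n o Esub
      by (intro exI[of _ E]) auto
  next
    case False
    define e0 where "e0 = r /\<^sub>R norm r"
    have e0n: "e0 \<bullet> e0 = 1" using False
      by (simp add: e0_def power2_norm_eq_inner[symmetric] power2_eq_square)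
    have e0o: "e \<in> E \<Longrightarrow> e0 \<bullet> e = 0" for e using rE by (simp add: e0_def inner_commute)
    have e0E: "e0 \<notin> E" using e0n e0o by force
    have e0s: "e0 \<in> span (insert a S)" using r_span by (simp add: e0_def span_scale)
    have "a = norm r *\<^sub>R e0 + (\<Sum>e\<in>E. (e \<bullet> a) *\<^sub>R e)" using False by (simp add: e0_def r_def)
    moreover have "norm r *\<^sub>R e0 + (\<Sum>e\<in>E. (e \<bullet> a) *\<^sub>R e) \<in> span (insert e0 E)"
      by (intro span_add span_sum span_scale span_base) auto
    ultimately have "a \<in> span (insert e0 E)" by simp
    moreover have "S \<subseteq> span (insert e0 E)" using sup span_mono[OF subset_insertI, of E e0] by blast
    ultimately show ?thesis using E n o e0n e0o e0E e0s Esub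
      by (intro exI[of _ "insert e0 E"]) (auto simp: inner_commute)
  qed
qed



lemma reduce:
  fixes \<phi> :: "'u::euclidean_space \<Rightarrow> ('u \<Rightarrow>\<^sub>L 'w::real_inner)"
    and u y :: "'n::finite \<Rightarrow> 'u" and \<gamma> :: real and Q :: "'w \<Rightarrow>\<^sub>L 'w"
  assumes g: "\<gamma> \<ge> 0" and Qnn: "nonneg_op Q"
  shows "\<exists>M. nonneg_op M \<and> objP' \<phi> u y \<gamma> M \<le> objP \<phi> u y \<gamma> Q"
proof -
  define \<Phi> where "\<Phi> = Phi_op \<phi> u"
  have fin: "finite (blinfun_apply \<Phi> ` (Basis :: ('u^'n) set))" by simp
  from gs[OF fin] obtain E where EE: "finite E \<and> (\<forall>e\<in>E. e \<bullet> e = 1) \<and> (\<forall>e\<in>E. \<forall>e'\<in>E. e \<noteq> e' \<longrightarrow> e \<bullet> e' = 0)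
     \<and> E \<subseteq> span (blinfun_apply \<Phi> ` Basis) \<and> blinfun_apply \<Phi> ` Basis \<subseteq> span E" by (rule exE)
  note E = conjunct1[OF EE]
  note n = conjunct1[OF conjunct2[OF EE]]
  note o = conjunct1[OF conjunct2[OF conjunct2[OF EE]]]
  note sub = conjunct1[OF conjunct2[OF conjunct2[OF conjunct2[OF EE]]]]
  note sup = conjunct2[OF conjunct2[OF conjunct2[OF conjunct2[OF EE]]]]
  have lin: "linear (blinfun_apply \<Phi>)" by (rule bounded_linear.linear[OF blinfun.bounded_linear_right])
  have rng: "blinfun_apply \<Phi> v \<in> span E" for v
  proof -
    have "blinfun_apply \<Phi> v = blinfun_apply \<Phi> (\<Sum>b\<in>Basis. (v \<bullet> b) *\<^sub>R b)"
      by (simp add: euclidean_representation)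
    also have "\<dots> = (\<Sum>b\<in>Basis. (v \<bullet> b) *\<^sub>R blinfun_apply \<Phi> b)"
      by (simp add: blinfun.sum_right blinfun.scaleR_right)
    also have "\<dots> \<in> span E"
    proof (intro span_sum span_scale)
      fix b :: "'u^'n" assume "b \<in> Basis"
      then show "blinfun_apply \<Phi> b \<in> span E" using sup by blast
    qed
    finally show ?thesis .
  qed
  have sub2: "span (blinfun_apply \<Phi> ` Basis) \<subseteq> range (blinfun_apply \<Phi>)"
    by (rule span_minimal) (auto intro: linear_subspace_image[OF lin subspace_UNIV])
  have "\<forall>e\<in>E. \<exists>z. blinfun_apply \<Phi> z = e" using sub sub2 by blast
  then obtain z where z: "\<And>e. e \<in> E \<Longrightarrow> blinfun_apply \<Phi> (z e) = e" by metis
  define P where "P = (\<lambda>w. \<Sum>e\<in>E. (e \<bullet> w) *\<^sub>R e)"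
  have Pe: "e \<bullet> P w = e \<bullet> w" if "e \<in> E" for e w
  proof -
    have "(\<Sum>e'\<in>E. (e' \<bullet> w) * (e \<bullet> e')) = (\<Sum>e'\<in>E. if e' = e then e \<bullet> w else 0)"
      by (rule sum.cong) (use n o that in \<open>auto simp: inner_commute\<close>)
    also have "\<dots> = e \<bullet> w" using E that by simp
    finally show ?thesis by (simp add: P_def inner_sum_right)
  qed
  have PE: "P w \<in> span E" for w
    unfolding P_def by (intro span_sum span_scale span_base)
  have Pfix: "P x = x" if "x \<in> span E" for x
  proof -
    have d: "x - P x \<in> span E" using that PE by (intro span_diff)
    have "orthogonal (x - P x) (x - P x)"
    proof (rule orthogonal_to_span[OF d])
      fix e assume "e \<in> E"
      then show "orthogonal (x - P x) e"
        using Pe[of e x] by (simp add: orthogonal_def inner_diff_left inner_diff_right inner_commute[of _ e])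
    qed
    then show ?thesis by (simp add: orthogonal_self)
  qed
  have Psym: "x \<bullet> P w = P x \<bullet> w" for x w
    by (simp add: P_def inner_sum_left inner_sum_right inner_commute mult.commute)
  have Pnorm: "norm (P w) \<le> norm w" for w
  proof -
    have "P w \<bullet> P w = (\<Sum>e\<in>E. (e \<bullet> w) * (P w \<bullet> e))"
      by (subst (2) P_def) (simp add: inner_sum_right)
    also have "\<dots> = (\<Sum>e\<in>E. (e \<bullet> w) * (e \<bullet> w))"
      by (rule sum.cong) (simp_all add: Pe inner_commute[of "P w"])
    finally have a: "P w \<bullet> P w = (\<Sum>e\<in>E. (e \<bullet> w) * (e \<bullet> w))" .
    have b: "w \<bullet> P w = (\<Sum>e\<in>E. (e \<bullet> w) * (e \<bullet> w))"
      by (simp add: P_def inner_sum_right inner_commute)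
    have "0 \<le> (w - P w) \<bullet> (w - P w)" by simp
    also have "\<dots> = w \<bullet> w - 2 * (w \<bullet> P w) + P w \<bullet> P w"
      by (simp add: inner_diff_left inner_diff_right inner_commute)
    finally have "P w \<bullet> P w \<le> w \<bullet> w" using a b by simp
    then show ?thesis by (simp add: norm_le)
  qed
  define Sop where "Sop = (\<lambda>w. \<Sum>e\<in>E. (e \<bullet> w) *\<^sub>R z e)"
  define Sa where "Sa = (\<lambda>v::'u^'n. \<Sum>e\<in>E. (z e \<bullet> v) *\<^sub>R e)"
  have blS: "bounded_linear Sop" unfolding Sop_def
    by (intro bounded_linear_sum bounded_linear_scaleR_const bounded_linear_inner_right)
  have blA: "bounded_linear Sa" unfolding Sa_def
    by (intro bounded_linear_sum bounded_linear_scaleR_const bounded_linear_inner_right)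
  define M where "M = Blinfun Sop o\<^sub>L Q o\<^sub>L Blinfun Sa"
  have Mapp: "blinfun_apply M v = Sop (blinfun_apply Q (Sa v))" for v
    by (simp add: M_def bounded_linear_Blinfun_apply[OF blS] bounded_linear_Blinfun_apply[OF blA])
  have Mnn: "nonneg_op M"
    unfolding nonneg_op_def
  proof
    fix v
    let ?q = "blinfun_apply Q (Sa v)"
    have "Sop ?q \<bullet> v = ?q \<bullet> Sa v"
      by (simp add: Sop_def Sa_def inner_sum_left inner_sum_right inner_commute mult.commute)
    also have "\<dots> \<ge> 0" using Qnn by (simp add: nonneg_op_def)
    finally show "0 \<le> blinfun_apply M v \<bullet> v" by (simp add: Mapp)
  qed
  have PhiS: "blinfun_apply \<Phi> (Sop w) = P w" for w
    unfolding Sop_def P_def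
    by (simp add: blinfun.sum_right blinfun.scaleR_right) (rule sum.cong, auto simp: z)
  have SaA: "Sa (blinfun_apply (badj \<Phi>) w) = P w" for w
    unfolding Sa_def P_def
    by (rule sum.cong) (auto simp: badj_inner z)
  have comp: "blinfun_apply (\<Phi> o\<^sub>L M o\<^sub>L badj \<Phi>) w = P (blinfun_apply Q (P w))" for w
    by (simp add: Mapp PhiS SaA)
  have Pphi: "P (blinfun_apply (\<phi> (u i)) x) = blinfun_apply (\<phi> (u i)) x" for i x
    using Pfix rng[of "axis i x"] by (simp add: \<Phi>_def Phi_axis)
  have adjP: "blinfun_apply (badj (\<phi> (u i))) (P w) = blinfun_apply (badj (\<phi> (u i))) w" for i w
  proof -
    have "blinfun_apply (\<phi> (u i)) b \<bullet> P w = blinfun_apply (\<phi> (u i)) b \<bullet> w" for b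
      using Psym Pphi by metis
    then show ?thesis by (simp add: badj_apply)
  qed
  have lossEq: "loss \<phi> u y (\<Phi> o\<^sub>L M o\<^sub>L badj \<Phi>) = loss \<phi> u y Q"
    unfolding loss_def comp Pphi adjP ..
  have normLe: "norm (\<Phi> o\<^sub>L M o\<^sub>L badj \<Phi>) \<le> norm Q"
  proof (rule norm_blinfun_bound[OF norm_ge_zero])
    fix w
    have "norm (P (blinfun_apply Q (P w))) \<le> norm (blinfun_apply Q (P w))" by (rule Pnorm)
    also have "\<dots> \<le> norm Q * norm (P w)" by (rule norm_blinfun)
    also have "\<dots> \<le> norm Q * norm w" by (rule mult_left_mono[OF Pnorm norm_ge_zero])
    finally show "norm (blinfun_apply (\<Phi> o\<^sub>L M o\<^sub>L badj \<Phi>) w) \<le> norm Q * norm w"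
      using comp[of w] by simp
  qed
  have "objP' \<phi> u y \<gamma> M \<le> objP \<phi> u y \<gamma> Q"
    unfolding objP'_def objP_def \<Phi>_def[symmetric] lossEq
    using mult_left_mono[OF normLe g] by simp
  then show ?thesis using Mnn by blast
qed

lemma lift_nonneg:
  fixes F :: "'a::euclidean_space \<Rightarrow>\<^sub>L 'w::real_inner"
  assumes "nonneg_op M"
  shows "nonneg_op (F o\<^sub>L M o\<^sub>L badj F)"
  using assms unfolding nonneg_op_def by (simp add: badj_inner[symmetric])


theorem theorem1:
  fixes \<phi> :: "'u::euclidean_space \<Rightarrow> ('u \<Rightarrow>\<^sub>L 'w::{real_inner, complete_space})"
    and u y :: "'n::finite \<Rightarrow> 'u"
    and \<gamma> :: real
  assumes "\<gamma> > 0"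
  shows "((\<exists>Q. solves_P \<phi> u y \<gamma> Q) \<longleftrightarrow> (\<exists>M. solves_P' \<phi> u y \<gamma> M))
    \<and> (\<forall>M. solves_P' \<phi> u y \<gamma> M \<longrightarrow>
          solves_P \<phi> u y \<gamma> (Phi_op \<phi> u o\<^sub>L M o\<^sub>L badj (Phi_op \<phi> u)))"
proof -
  have g: "\<gamma> \<ge> 0" using assms by simp
  have A: "solves_P \<phi> u y \<gamma> (Phi_op \<phi> u o\<^sub>L M o\<^sub>L badj (Phi_op \<phi> u))"
    if sM: "solves_P' \<phi> u y \<gamma> M" for M
  proof -
    have Mnn: "nonneg_op M" and Mmin: "\<And>M'. nonneg_op M' \<Longrightarrow> objP' \<phi> u y \<gamma> M \<le> objP' \<phi> u y \<gamma> M'"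
      using sM by (auto simp: solves_P'_def)
    have "objP \<phi> u y \<gamma> (Phi_op \<phi> u o\<^sub>L M o\<^sub>L badj (Phi_op \<phi> u)) \<le> objP \<phi> u y \<gamma> Q'"
      if Q'nn: "nonneg_op Q'" for Q'
    proof -
      obtain M' where "nonneg_op M'" "objP' \<phi> u y \<gamma> M' \<le> objP \<phi> u y \<gamma> Q'"
        using reduce[OF g Q'nn, of \<phi> u y] by blast
      then show ?thesis using Mmin[of M'] unfolding objP'_def by linarith
    qed
    then show ?thesis unfolding solves_P_def using lift_nonneg[OF Mnn] by blast
  qed
  have B: "\<exists>M. solves_P' \<phi> u y \<gamma> M" if sQ: "solves_P \<phi> u y \<gamma> Q" for Q
  proof -
    have Qnn: "nonneg_op Q" and Qmin: "\<And>Q'. nonneg_op Q' \<Longrightarrow> objP \<phi> u y \<gamma> Q \<le> objP \<phi> u y \<gamma> Q'"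
      using sQ by (auto simp: solves_P_def)
    obtain M where Mnn: "nonneg_op M" and Mle: "objP' \<phi> u y \<gamma> M \<le> objP \<phi> u y \<gamma> Q"
      using reduce[OF g Qnn, of \<phi> u y] by blast
    have "objP' \<phi> u y \<gamma> M \<le> objP' \<phi> u y \<gamma> M'" if "nonneg_op M'" for M'
      using Mle Qmin[OF lift_nonneg[OF that, of "Phi_op \<phi> u"]] unfolding objP'_def by linarith
    then show ?thesis using Mnn unfolding solves_P'_def by blast
  qed
  show ?thesis using A B by blast
qed

end
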